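(* Let $s\in(0,1)$, let $\Omega\subset\mathbb{R}^N$ be a bounded open set of class $C^{1,1}$, and let $X\in C^0(\overline\Omega;\mathbb{R}^N)$. Let $u\in C^s(\overline\Omega)\cap C^1(\Omega)$ with $u=0$ on $\mathbb{R}^N\setminus\Omega$, such that $\psi:=u/\delta^s$ satisfies, for some $\alpha\in(0,1)$ and $c>0$: - $\|\psi\|_{C^\alpha(\overline\Omega)}\le c$; - $|\nabla\psi(x)|\le c\,\delta(x)^{\alpha-1}$ for all $x\in\Omega$. Let $U_k:=u\,(\zeta_k\circ\delta)$ and $g^0_k:=\nabla U_k\cdot X$. Then there is a constant $C>0$ such that $$k^{s-1}\big|g^0_k(\Psi(\sigma,r/k))\big|\le C(r^{s-1}+r^{s-1+\alpha})$$ for all $k\in\mathbb{N}$, $\sigma\in\partial\Omega$ and $0<r<k\varepsilon_\Omega$. Moreover, $$\lim_{k\to\infty}k^{s-1}g^0_k(\Psi(\sigma,r/k))=h'(r)\,\psi(\sigma)\,X(\sigma)\cdot\nu(\sigma)$$ for every $\sigma\in\partial\Omega$ and $r>0$.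
   Context: $\delta\in C^{1,1}(\mathbb{R}^N)$ is a fixed function equal to the signed distance $\mathrm{dist}(\cdot,\mathbb{R}^N\setminus\Omega)-\mathrm{dist}(\cdot,\Omega)$ near $\partial\Omega$, positive in $\Omega$, negative in $\mathbb{R}^N\setminus\overline\Omega$. $\nu$ is the interior unit normal on $\partial\Omega$, and $\psi$ on $\partial\Omega$ is its continuous extension. $\varepsilon_\Omega>0$ is fixed so that $\Psi:\partial\Omega\times(-\varepsilon_\Omega,\varepsilon_\Omega)\to\{x:|\delta(x)|<\varepsilon_\Omega\}$, $\Psi(\sigma,r)=\sigma+r\nu(\sigma)$, is a bi-Lipschitz bijection with $\delta(\Psi(\sigma,r))=r$. Fix $\rho\in C^\infty_c((-2,2))$ with $0\le\rho\le1$ and $\rho\equiv1$ on $(-1,1)$. Put $\zeta=1-\rho$, $\rho_k(t)=\rho(kt)$, $\zeta_k=1-\rho_k$, and $h(r)=r_+^s\zeta(r)$. *)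

theory Defs
  imports "HOL-Analysis.Analysis"
begin

definition hoelder_on :: "real \<Rightarrow> real \<Rightarrow> 'a::metric_space set \<Rightarrow> ('a \<Rightarrow> real) \<Rightarrow> bool" where
  "hoelder_on a H S f \<longleftrightarrow> (\<forall>x\<in>S. \<forall>y\<in>S. \<bar>f x - f y\<bar> \<le> H * dist x y powr a)"

definition in_C_alpha :: "real \<Rightarrow> 'a::metric_space set \<Rightarrow> ('a \<Rightarrow> real) \<Rightarrow> bool" where
  "in_C_alpha a S f \<longleftrightarrow> (\<exists>M H. (\<forall>x\<in>S. \<bar>f x\<bar> \<le> M) \<and> hoelder_on a H S f)"

definition C_alpha_norm_le :: "real \<Rightarrow> 'a::metric_space set \<Rightarrow> ('a \<Rightarrow> real) \<Rightarrow> real \<Rightarrow> bool" where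
  "C_alpha_norm_le a S f c \<longleftrightarrow>
     (\<exists>M H. (\<forall>x\<in>S. \<bar>f x\<bar> \<le> M) \<and> hoelder_on a H S f \<and> M + H \<le> c)"

definition C1_on :: "'a::euclidean_space set \<Rightarrow> ('a \<Rightarrow> real) \<Rightarrow> bool" where
  "C1_on S f \<longleftrightarrow> (\<exists>G. (\<forall>x\<in>S. (f has_derivative (\<lambda>v. G x \<bullet> v)) (at x)) \<and> continuous_on S G)"

definition C11_global :: "('a::euclidean_space \<Rightarrow> real) \<Rightarrow> bool" where
  "C11_global f \<longleftrightarrow> (\<exists>G L. (\<forall>x. (f has_derivative (\<lambda>v. G x \<bullet> v)) (at x)) \<and>
                             (\<forall>x y. norm (G x - G y) \<le> L * dist x y))"

definition C11_domain :: "'a::euclidean_space set \<Rightarrow> bool" where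
  "C11_domain \<Omega> \<longleftrightarrow> open \<Omega> \<and>
     (\<forall>x0\<in>frontier \<Omega>. \<exists>r>0. \<exists>\<phi> G L.
        (\<forall>x\<in>ball x0 r. (\<phi> has_derivative (\<lambda>v. G x \<bullet> v)) (at x) \<and> G x \<noteq> 0) \<and>
        (\<forall>x\<in>ball x0 r. \<forall>y\<in>ball x0 r. norm (G x - G y) \<le> L * dist x y) \<and>
        \<Omega> \<inter> ball x0 r = {x\<in>ball x0 r. \<phi> x > 0})"

definition smooth_real :: "(real \<Rightarrow> real) \<Rightarrow> bool" where
  "smooth_real f \<longleftrightarrow> (\<exists>D. D 0 = f \<and> (\<forall>n x. (D n has_real_derivative D (Suc n) x) (at x)))"

end

theory Submission
  imports Defs
begin



lemma deriv_formula:
  fixes \<Omega> :: "'a::euclidean_space set" and \<delta> \<psi> u :: "'a \<Rightarrow> real" and Rf Rd :: "real \<Rightarrow> real"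
  assumes "open \<Omega>" "p \<in> \<Omega>" "\<delta> p > 0"
    and uq: "\<And>x. x \<in> \<Omega> \<Longrightarrow> u x = \<psi> x * \<delta> x powr s"
    and dd: "(\<delta> has_derivative (\<lambda>v. Gp \<bullet> v)) (at p)"
    and dpsi: "\<psi> differentiable (at p)"
    and dr: "(Rf has_real_derivative Rd (k * \<delta> p)) (at (k * \<delta> p))"
  shows "frechet_derivative (\<lambda>x. u x * (1 - Rf (k * \<delta> x))) (at p) v =
     (frechet_derivative \<psi> (at p) v * \<delta> p powr s + \<psi> p * (s * \<delta> p powr (s-1) * (Gp \<bullet> v))) * (1 - Rf (k * \<delta> p))
       - u p * (Rd (k * \<delta> p) * (k * (Gp \<bullet> v)))"
proof -
  have d1: "(\<psi> has_derivative frechet_derivative \<psi> (at p)) (at p)"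
    using dpsi frechet_derivative_works by blast
  have "((\<lambda>t. t powr s) has_derivative (\<lambda>t. (s * \<delta> p powr (s-1)) * t)) (at (\<delta> p))"
    using has_real_derivative_powr[OF assms(3), of s] unfolding has_field_derivative_def
    by simp
  from has_derivative_compose[OF dd this]
  have d2: "((\<lambda>x. \<delta> x powr s) has_derivative (\<lambda>v. (s * \<delta> p powr (s-1)) * (Gp \<bullet> v))) (at p)" .
  have dk: "((\<lambda>x. k * \<delta> x) has_derivative (\<lambda>v. k * (Gp \<bullet> v))) (at p)"
    using dd by (intro has_derivative_mult_right)
  have "(Rf has_derivative (\<lambda>t. Rd (k * \<delta> p) * t)) (at (k * \<delta> p))"
    using dr unfolding has_field_derivative_def by simp
  from has_derivative_compose[OF dk this]
  have d3: "((\<lambda>x. Rf (k * \<delta> x)) has_derivative (\<lambda>v. Rd (k * \<delta> p) * (k * (Gp \<bullet> v)))) (at p)" .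
  have d4: "((\<lambda>x. 1 - Rf (k * \<delta> x)) has_derivative (\<lambda>v. 0 - Rd (k * \<delta> p) * (k * (Gp \<bullet> v)))) (at p)"
    by (intro has_derivative_diff has_derivative_const d3)
  have d5: "((\<lambda>x. \<psi> x * \<delta> x powr s) has_derivative
     (\<lambda>v. \<psi> p * ((s * \<delta> p powr (s-1)) * (Gp \<bullet> v)) + frechet_derivative \<psi> (at p) v * \<delta> p powr s)) (at p)"
    using has_derivative_mult[OF d1 d2] .
  have d6: "((\<lambda>x. (\<psi> x * \<delta> x powr s) * (1 - Rf (k * \<delta> x))) has_derivative
     (\<lambda>v. (\<psi> p * \<delta> p powr s) * (0 - Rd (k * \<delta> p) * (k * (Gp \<bullet> v))) + (\<psi> p * ((s * \<delta> p powr (s-1)) * (Gp \<bullet> v)) + frechet_derivative \<psi> (at p) v * \<delta> p powr s) * (1 - Rf (k * \<delta> p)))) (at p)"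
    using has_derivative_mult[OF d5 d4] .
  have d7: "((\<lambda>x. u x * (1 - Rf (k * \<delta> x))) has_derivative
     (\<lambda>v. (\<psi> p * \<delta> p powr s) * (0 - Rd (k * \<delta> p) * (k * (Gp \<bullet> v))) + (\<psi> p * ((s * \<delta> p powr (s-1)) * (Gp \<bullet> v)) + frechet_derivative \<psi> (at p) v * \<delta> p powr s) * (1 - Rf (k * \<delta> p)))) (at p)"
    by (rule has_derivative_transform_within_open[OF d6 assms(1,2)]) (simp add: uq)
  show ?thesis using frechet_derivative_at[OF d7, symmetric] uq[OF assms(2)]
    by (simp add: algebra_simps)
qed


lemma powr_ids:
  fixes k r s a :: real assumes k: "k > 0" and r: "r > 0"
  shows "k powr (s-1) * (r/k) powr s = r powr s / k"
    and "k powr (s-1) * (r/k) powr (s-1) = r powr (s-1)"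
    and "r powr s / k * (r/k) powr (a-1) = r powr (s-1+a) * k powr (-a)"
proof -
  have e1: "k powr (s-1) = k powr s / k" using k by (simp add: powr_diff)
  have e2: "k powr (a-1) = k powr a / k" using k by (simp add: powr_diff)
  have e3: "r powr (s-1+a) = r powr s * r powr a / r" using r by (simp add: powr_diff powr_add)
  show "k powr (s-1) * (r/k) powr s = r powr s / k"
    using k r by (simp add: e1 powr_divide)
  show "k powr (s-1) * (r/k) powr (s-1) = r powr (s-1)"
    using k r by (simp add: powr_divide)
  show "r powr s / k * (r/k) powr (a-1) = r powr (s-1+a) * k powr (-a)"
    using k r by (simp add: powr_divide e2 e3 powr_minus field_simps powr_diff powr_add)
qed
lemma ring_id: "(A::real) * ((F * ds + ps * (s * ds1 * g)) * (1 - rr) - ps * ds * (dd * (k * g)))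
   = (A * ds) * F * (1 - rr) + ps * s * (A * ds1) * g * (1 - rr) - ps * (A * (ds * k)) * dd * g"
  by (simp add: algebra_simps)

theorem lemma6p1:
  fixes \<Omega> :: "'a::euclidean_space set"
    and \<delta> :: "'a \<Rightarrow> real" and \<nu> :: "'a \<Rightarrow> 'a" and \<epsilon> :: real
    and \<rho> :: "real \<Rightarrow> real"
    and s \<alpha> c :: real and X :: "'a \<Rightarrow> 'a" and u \<psi> :: "'a \<Rightarrow> real"
  assumes s: "0 < s" "s < 1"
    and dom: "bounded \<Omega>" "C11_domain \<Omega>"
    \<comment> \<open>the fixed function delta\<close>
    and delta_C11: "C11_global \<delta>"
    and delta_sdist: "\<exists>\<eta>>0. \<forall>x. infdist x (frontier \<Omega>) < \<eta> \<longrightarrow>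
                         \<delta> x = infdist x (- \<Omega>) - infdist x \<Omega>"
    and delta_pos: "\<forall>x\<in>\<Omega>. \<delta> x > 0"
    and delta_neg: "\<forall>x. x \<notin> closure \<Omega> \<longrightarrow> \<delta> x < 0"
    \<comment> \<open>nu is the interior unit normal = gradient of the signed distance on the boundary\<close>
    and nu: "\<forall>\<sigma>\<in>frontier \<Omega>. (\<delta> has_derivative (\<lambda>v. \<nu> \<sigma> \<bullet> v)) (at \<sigma>)"
    \<comment> \<open>the fixed tubular-neighbourhood width epsilon_Omega\<close>
    and eps: "\<epsilon> > 0"
    and Psi_bij: "bij_betw (\<lambda>(\<sigma>, r). \<sigma> + r *\<^sub>R \<nu> \<sigma>) (frontier \<Omega> \<times> {-\<epsilon><..<\<epsilon>})
                    {x. \<bar>\<delta> x\<bar> < \<epsilon>}"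
    and Psi_bilip: "\<exists>L>0. \<forall>\<sigma>\<in>frontier \<Omega>. \<forall>\<sigma>'\<in>frontier \<Omega>. \<forall>r\<in>{-\<epsilon><..<\<epsilon>}. \<forall>r'\<in>{-\<epsilon><..<\<epsilon>}.
                 dist (\<sigma> + r *\<^sub>R \<nu> \<sigma>) (\<sigma>' + r' *\<^sub>R \<nu> \<sigma>') \<le> L * (dist \<sigma> \<sigma>' + \<bar>r - r'\<bar>) \<and>
                 dist \<sigma> \<sigma>' + \<bar>r - r'\<bar> \<le> L * dist (\<sigma> + r *\<^sub>R \<nu> \<sigma>) (\<sigma>' + r' *\<^sub>R \<nu> \<sigma>')"
    and Psi_delta: "\<forall>\<sigma>\<in>frontier \<Omega>. \<forall>r\<in>{-\<epsilon><..<\<epsilon>}. \<delta> (\<sigma> + r *\<^sub>R \<nu> \<sigma>) = r"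
    \<comment> \<open>the fixed cut-off rho \<in> C_c^\<infinity>((-2,2))\<close>
    and rho_smooth: "smooth_real \<rho>"
    and rho_supp: "closure {t. \<rho> t \<noteq> 0} \<subseteq> {-2<..<2}"
    and rho_range: "\<forall>t. 0 \<le> \<rho> t \<and> \<rho> t \<le> 1"
    and rho_one: "\<forall>t\<in>{-1<..<1}. \<rho> t = 1"
    \<comment> \<open>the data of the lemma\<close>
    and X_cont: "continuous_on (closure \<Omega>) X"
    and u_Cs: "in_C_alpha s (closure \<Omega>) u"
    and u_C1: "C1_on \<Omega> u"
    and u_zero: "\<forall>x. x \<notin> \<Omega> \<longrightarrow> u x = 0"
    and psi_def: "\<forall>x\<in>\<Omega>. \<psi> x = u x / \<delta> x powr s"
    and psi_ext: "continuous_on (closure \<Omega>) \<psi>"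
    and alpha: "0 < \<alpha>" "\<alpha> < 1" and c: "c > 0"
    and psi_norm: "C_alpha_norm_le \<alpha> (closure \<Omega>) \<psi> c"
    and psi_grad: "\<forall>x\<in>\<Omega>. \<psi> differentiable (at x) \<and>
                     (\<forall>v. \<bar>frechet_derivative \<psi> (at x) v\<bar> \<le> c * \<delta> x powr (\<alpha> - 1) * norm v)"
  shows "let U = (\<lambda>(k::nat) x. u x * (1 - \<rho> (real k * \<delta> x)));
             g = (\<lambda>k x. frechet_derivative (U k) (at x) (X x));
             h = (\<lambda>r::real. (max r 0) powr s * (1 - \<rho> r))
         in (\<exists>C>0. \<forall>k::nat. \<forall>\<sigma>\<in>frontier \<Omega>. \<forall>r. 0 < r \<and> r < real k * \<epsilon> \<longrightarrow>
                real k powr (s - 1) * \<bar>g k (\<sigma> + (r / real k) *\<^sub>R \<nu> \<sigma>)\<bar>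
                  \<le> C * (r powr (s - 1) + r powr (s - 1 + \<alpha>)))
          \<and> (\<forall>\<sigma>\<in>frontier \<Omega>. \<forall>r>0.
                ((\<lambda>k. real k powr (s - 1) * g k (\<sigma> + (r / real k) *\<^sub>R \<nu> \<sigma>))
                   \<longlongrightarrow> deriv h r * \<psi> \<sigma> * (X \<sigma> \<bullet> \<nu> \<sigma>)) sequentially)"
proof -
  obtain D where D0: "D 0 = \<rho>" and Dd: "\<And>n x. (D n has_real_derivative D (Suc n) x) (at x)"
    using rho_smooth unfolding smooth_real_def by blast
  obtain G L where GD: "\<And>x. (\<delta> has_derivative (\<lambda>v. G x \<bullet> v)) (at x)"
      and GL: "\<And>x y. norm (G x - G y) \<le> L * dist x y"
    using delta_C11 unfolding C11_global_def by blast
  have opn: "open \<Omega>" using dom(2) unfolding C11_domain_def by blast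
  have uq: "\<And>x. x \<in> \<Omega> \<Longrightarrow> u x = \<psi> x * \<delta> x powr s"
  proof -
    fix x assume x: "x \<in> \<Omega>"
    then have "\<delta> x > 0" using delta_pos by blast
    then show "u x = \<psi> x * \<delta> x powr s" using psi_def x by simp
  qed
  have inO: "\<And>\<sigma> t. \<sigma> \<in> frontier \<Omega> \<Longrightarrow> 0 < t \<Longrightarrow> t < \<epsilon> \<Longrightarrow> \<sigma> + t *\<^sub>R \<nu> \<sigma> \<in> \<Omega>"
  proof -
    fix \<sigma> t assume \<sigma>: "\<sigma> \<in> frontier \<Omega>" and t: "0 < t" "t < \<epsilon>"
    define p where "p = \<sigma> + t *\<^sub>R \<nu> \<sigma>"
    have dp: "\<delta> p = t" using Psi_delta \<sigma> t unfolding p_def by auto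
    have pc: "p \<in> closure \<Omega>" using delta_neg dp t by force
    show "\<sigma> + t *\<^sub>R \<nu> \<sigma> \<in> \<Omega>"
    proof (rule ccontr)
      assume "\<sigma> + t *\<^sub>R \<nu> \<sigma> \<notin> \<Omega>"
      then have pn: "p \<notin> \<Omega>" unfolding p_def by simp
      then have pf: "p \<in> frontier \<Omega>" using pc opn by (simp add: frontier_def interior_open)
      obtain \<eta> where \<eta>: "\<eta> > 0" "\<forall>x. infdist x (frontier \<Omega>) < \<eta> \<longrightarrow> \<delta> x = infdist x (- \<Omega>) - infdist x \<Omega>"
        using delta_sdist by blast
      have "infdist p (frontier \<Omega>) = 0" using pf by (simp add: infdist_zero)
      then have "\<delta> p = infdist p (- \<Omega>) - infdist p \<Omega>" using \<eta> by auto
      moreover have "infdist p (- \<Omega>) = 0" using pn by (simp add: infdist_zero)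
      moreover have "infdist p \<Omega> = 0"
        using pc in_closure_iff_infdist_zero[of \<Omega> p] by fastforce
      ultimately show False using dp t by simp
    qed
  qed
  have "compact (X ` closure \<Omega>)"
    using compact_continuous_image[OF X_cont] dom(1) compact_closure by blast
  then have "bounded (X ` closure \<Omega>)" by (rule compact_imp_bounded)
  then obtain MX where MX0: "MX > 0" "\<forall>y\<in>X ` closure \<Omega>. norm y \<le> MX"
    unfolding bounded_pos by blast
  then have MX: "MX > 0" "\<And>x. x \<in> closure \<Omega> \<Longrightarrow> norm (X x) \<le> MX" by auto
  obtain M0 H0 where M0: "\<And>x. x \<in> closure \<Omega> \<Longrightarrow> \<bar>\<psi> x\<bar> \<le> M0"
    using psi_norm unfolding C_alpha_norm_le_def by blast
  define Mp where "Mp = \<bar>M0\<bar> + 1"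
  have Mp: "Mp > 0" "\<And>x. x \<in> closure \<Omega> \<Longrightarrow> \<bar>\<psi> x\<bar> \<le> Mp"
    unfolding Mp_def using M0 by force+
  obtain B where B: "\<forall>x\<in>\<Omega>. norm x \<le> B"
    using dom(1) unfolding bounded_pos by blast
  define Mn where "Mn = norm (G 0) + \<bar>L\<bar> * \<bar>B\<bar> + 1"
  have Mn: "Mn > 0" "\<And>x. x \<in> \<Omega> \<Longrightarrow> norm (G x) \<le> Mn"
  proof -
    show "Mn > 0" unfolding Mn_def by (simp add: add_nonneg_pos)
    fix x assume x: "x \<in> \<Omega>"
    have "norm (G x) \<le> norm (G 0) + norm (G x - G 0)" by (metis norm_triangle_sub)
    also have "norm (G x - G 0) \<le> L * norm x" using GL[of x 0] by simp
    also have "L * norm x \<le> \<bar>L\<bar> * norm x" by (simp add: mult_right_mono)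
    also have "\<bar>L\<bar> * norm x \<le> \<bar>L\<bar> * \<bar>B\<bar>" using B x by (intro mult_left_mono) auto
    finally show "norm (G x) \<le> Mn" unfolding Mn_def by simp
  qed
  have "continuous_on {0..2} (D 1)"
    using Dd[of 1] by (intro continuous_at_imp_continuous_on) (auto intro: DERIV_isCont)
  then have "compact (D 1 ` {0..2})" by (intro compact_continuous_image) auto
  then have "bounded (D 1 ` {0..2})" by (rule compact_imp_bounded)
  then obtain M1 where M10: "M1 > 0" "\<forall>y\<in>D 1 ` {0..2}. norm y \<le> M1"
    unfolding bounded_pos by blast
  then have M1: "M1 > 0" "\<And>t. t \<in> {0..2} \<Longrightarrow> \<bar>D 1 t\<bar> \<le> M1" by auto
  have supp: "\<And>t. t \<ge> 2 \<Longrightarrow> D 1 t = 0"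
  proof -
    fix t :: real assume t: "t \<ge> 2"
    define S where "S = - closure {t. \<rho> t \<noteq> 0}"
    have t2: "t \<notin> {-2<..<2}" using t by simp
    have S1: "open S" unfolding S_def by (intro open_Compl closed_closure)
    have "t \<notin> closure {t. \<rho> t \<noteq> 0}" using rho_supp t2 by (rule contra_subsetD)
    then have S2: "t \<in> S" unfolding S_def by (simp only: Compl_iff not_False_eq_True)
    note S = S1 S2
    have "0 = \<rho> x" if "x \<in> S" for x
    proof -
      have "x \<notin> closure {t. \<rho> t \<noteq> 0}" using that unfolding S_def by (simp only: Compl_iff not_False_eq_True)
      then have "x \<notin> {t. \<rho> t \<noteq> 0}" using closure_subset by (rule contra_subsetD[rotated])
      then show ?thesis by simp
    qed
    then have "(\<rho> has_real_derivative 0) (at t)"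
      using has_field_derivative_transform_within_open[OF DERIV_const S] by blast
    moreover have "(\<rho> has_real_derivative D 1 t) (at t)" using Dd[of 0 t] D0 by simp
    ultimately show "D 1 t = 0" using DERIV_unique by blast
  qed
  define P where "P = (\<lambda>(k::nat) \<sigma> (r::real). \<sigma> + (r / real k) *\<^sub>R \<nu> \<sigma>)"
  define T1 where "T1 = (\<lambda>(k::nat) \<sigma> (r::real).
      r powr s / real k * frechet_derivative \<psi> (at (P k \<sigma> r)) (X (P k \<sigma> r)) * (1 - \<rho> r))"
  define T2 where "T2 = (\<lambda>(k::nat) \<sigma> (r::real).
      \<psi> (P k \<sigma> r) * s * r powr (s-1) * (G (P k \<sigma> r) \<bullet> X (P k \<sigma> r)) * (1 - \<rho> r))"
  define T3 where "T3 = (\<lambda>(k::nat) \<sigma> (r::real).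
      \<psi> (P k \<sigma> r) * r powr s * D 1 r * (G (P k \<sigma> r) \<bullet> X (P k \<sigma> r)))"
  define F where "F = (\<lambda>(k::nat) \<sigma> (r::real). T1 k \<sigma> r + T2 k \<sigma> r - T3 k \<sigma> r)"
  have PO: "P k \<sigma> r \<in> \<Omega>" and dP: "\<delta> (P k \<sigma> r) = r / real k"
    if "\<sigma> \<in> frontier \<Omega>" "0 < r" "r < real k * \<epsilon>" for k \<sigma> r
  proof -
    have k: "real k > 0" using that eps by (cases k) auto
    have "r / real k < \<epsilon>" using that k by (simp add: divide_less_eq mult.commute)
    moreover have "0 < r / real k" using that k by simp
    ultimately show "P k \<sigma> r \<in> \<Omega>" "\<delta> (P k \<sigma> r) = r / real k"
      using inO that Psi_delta unfolding P_def by auto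
  qed
  have formula: "real k powr (s - 1) * frechet_derivative (\<lambda>x. u x * (1 - \<rho> (real k * \<delta> x))) (at (P k \<sigma> r)) (X (P k \<sigma> r))
      = F k \<sigma> r"
    if that: "\<sigma> \<in> frontier \<Omega>" "0 < r" "r < real k * \<epsilon>" for k \<sigma> r
  proof -
    have k: "real k > 0" using that eps by (cases k) auto
    define p where "p = P k \<sigma> r"
    have p: "p \<in> \<Omega>" "\<delta> p = r / real k" using PO[OF that] dP[OF that] unfolding p_def by auto
    have kd: "real k * \<delta> p = r" using p k by simp
    have dpp: "\<delta> p > 0" using p k that by simp
    have dr: "(\<rho> has_real_derivative D 1 (real k * \<delta> p)) (at (real k * \<delta> p))"
      using Dd[of 0] D0 by simp
    have psd: "\<psi> differentiable (at p)" using psi_grad p by blast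
    have e: "frechet_derivative (\<lambda>x. u x * (1 - \<rho> (real k * \<delta> x))) (at p) (X p) =
     (frechet_derivative \<psi> (at p) (X p) * \<delta> p powr s + \<psi> p * (s * \<delta> p powr (s-1) * (G p \<bullet> X p))) * (1 - \<rho> (real k * \<delta> p))
       - u p * (D 1 (real k * \<delta> p) * (real k * (G p \<bullet> X p)))"
      by (rule deriv_formula[where Rf=\<rho> and Rd="D 1" and k="real k", OF opn p(1) dpp uq GD[of p] psd dr])
    have i1: "real k powr (s-1) * (r/real k) powr s = r powr s / real k"
     and i2: "real k powr (s-1) * (r/real k) powr (s-1) = r powr (s-1)"
      using powr_ids[OF k that(2)] by auto
    have i3: "real k powr (s-1) * ((r/real k) powr s * real k) = r powr s"
      using i1 k by (simp add: field_simps)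
    have kd': "real k * (r / real k) = r" using k by simp
    show ?thesis unfolding p_def[symmetric] F_def T1_def T2_def T3_def e kd uq[OF p(1)] p(2) kd'
        ring_id i1 i2 i3 by (rule refl)
  qed
  have absle: "\<bar>a * b\<bar> \<le> A * B" if "\<bar>a\<bar> \<le> A" "\<bar>b\<bar> \<le> B" for a b A B :: real
    using that by (simp add: abs_mult mult_mono')
  have rho1: "\<bar>1 - \<rho> t\<bar> \<le> 1" for t using rho_range[rule_format, of t] by (simp add: abs_le_iff)
  have kpos: "real k > 0" if "0 < r" "r < real k * \<epsilon>" for k r
    using that eps by (cases k) auto
  have GX: "\<bar>G (P k \<sigma> r) \<bullet> X (P k \<sigma> r)\<bar> \<le> Mn * MX"
    if that: "\<sigma> \<in> frontier \<Omega>" "0 < r" "r < real k * \<epsilon>" for k \<sigma> r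
  proof -
    have p: "P k \<sigma> r \<in> \<Omega>" using PO[OF that] .
    have "\<bar>G (P k \<sigma> r) \<bullet> X (P k \<sigma> r)\<bar> \<le> norm (G (P k \<sigma> r)) * norm (X (P k \<sigma> r))"
      by (rule Cauchy_Schwarz_ineq2)
    also have "\<dots> \<le> Mn * MX"
      using Mn Mn(2)[OF p] MX(2)[of "P k \<sigma> r"] p closure_subset by (intro mult_mono) auto
    finally show ?thesis .
  qed
  have T1b: "\<bar>T1 k \<sigma> r\<bar> \<le> c * MX * (r powr (s - 1 + \<alpha>) * real k powr (- \<alpha>))"
    if that: "\<sigma> \<in> frontier \<Omega>" "0 < r" "r < real k * \<epsilon>" for k \<sigma> r
  proof -
    have k: "real k > 0" using kpos that(2,3) .
    have p: "P k \<sigma> r \<in> \<Omega>" "\<delta> (P k \<sigma> r) = r / real k" using PO[OF that] dP[OF that] by auto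
    have "\<bar>frechet_derivative \<psi> (at (P k \<sigma> r)) (X (P k \<sigma> r))\<bar>
        \<le> c * \<delta> (P k \<sigma> r) powr (\<alpha> - 1) * norm (X (P k \<sigma> r))"
      using psi_grad p(1) by blast
    also have "\<dots> \<le> c * (r / real k) powr (\<alpha> - 1) * MX"
      unfolding p(2) using c MX(2)[of "P k \<sigma> r"] p(1) closure_subset
      by (intro mult_left_mono) auto
    finally have fb: "\<bar>frechet_derivative \<psi> (at (P k \<sigma> r)) (X (P k \<sigma> r))\<bar> \<le> c * (r / real k) powr (\<alpha> - 1) * MX" .
    have "\<bar>T1 k \<sigma> r\<bar> \<le> r powr s / real k * (c * (r / real k) powr (\<alpha> - 1) * MX) * 1"
      unfolding T1_def by (intro absle fb rho1) (use k in simp)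
    also have "\<dots> = c * MX * (r powr s / real k * (r / real k) powr (\<alpha> - 1))" by simp
    also have "\<dots> = c * MX * (r powr (s - 1 + \<alpha>) * real k powr (- \<alpha>))"
      using powr_ids(3)[OF k that(2), of s \<alpha>] by simp
    finally show ?thesis .
  qed
  have T1b': "\<bar>T1 k \<sigma> r\<bar> \<le> c * MX * r powr (s - 1 + \<alpha>)"
    if that: "\<sigma> \<in> frontier \<Omega>" "0 < r" "r < real k * \<epsilon>" for k \<sigma> r
  proof -
    have k: "real k > 0" using kpos that(2,3) .
    then have "real k \<ge> 1" by simp
    then have "real k powr \<alpha> \<ge> 1" using alpha by (intro ge_one_powr_ge_zero) auto
    then have "real k powr (- \<alpha>) \<le> 1" using k by (simp add: powr_minus field_simps)
    then have "r powr (s - 1 + \<alpha>) * real k powr (- \<alpha>) \<le> r powr (s - 1 + \<alpha>)"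
      by (simp add: mult_left_le)
    then have "c * MX * (r powr (s - 1 + \<alpha>) * real k powr (- \<alpha>)) \<le> c * MX * r powr (s - 1 + \<alpha>)"
      using c MX(1) by (intro mult_left_mono) auto
    then show ?thesis using T1b[OF that] by linarith
  qed
  have T2b: "\<bar>T2 k \<sigma> r\<bar> \<le> Mp * s * r powr (s - 1) * (Mn * MX) * 1"
    if that: "\<sigma> \<in> frontier \<Omega>" "0 < r" "r < real k * \<epsilon>" for k \<sigma> r
  proof -
    have p: "P k \<sigma> r \<in> closure \<Omega>" using PO[OF that] closure_subset by auto
    show ?thesis unfolding T2_def
      by (intro absle rho1 GX[OF that] Mp(2)[OF p]) (use s in auto)
  qed
  have T3b: "\<bar>T3 k \<sigma> r\<bar> \<le> Mp * (2 * r powr (s - 1)) * M1 * (Mn * MX)"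
    if that: "\<sigma> \<in> frontier \<Omega>" "0 < r" "r < real k * \<epsilon>" for k \<sigma> r
  proof (cases "r < 2")
    case True
    have p: "P k \<sigma> r \<in> closure \<Omega>" using PO[OF that] closure_subset by auto
    have "r powr s = r * r powr (s - 1)" using that(2) by (simp add: powr_diff)
    also have "\<dots> \<le> 2 * r powr (s - 1)" using True by (intro mult_right_mono) auto
    finally have rs: "\<bar>r powr s\<bar> \<le> 2 * r powr (s - 1)" by simp
    show ?thesis unfolding T3_def
      by (intro absle rs GX[OF that] Mp(2)[OF p] M1(2)) (use that True in auto)
  next
    case False
    then have "D 1 r = 0" using supp by simp
    then show ?thesis unfolding T3_def using Mp M1 Mn MX by simp
  qed
  show ?thesis unfolding Let_def
  proof (intro conjI)
    define C where "C = c * MX + Mp * s * Mn * MX + 2 * Mp * M1 * Mn * MX"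
    have Cpos: "C > 0" unfolding C_def using c MX Mp Mn M1 s by (intro add_pos_nonneg) auto
    show "\<exists>C>0. \<forall>k. \<forall>\<sigma>\<in>frontier \<Omega>. \<forall>r. 0 < r \<and> r < real k * \<epsilon> \<longrightarrow>
       real k powr (s - 1) * \<bar>frechet_derivative (\<lambda>x. u x * (1 - \<rho> (real k * \<delta> x))) (at (\<sigma> + (r / real k) *\<^sub>R \<nu> \<sigma>)) (X (\<sigma> + (r / real k) *\<^sub>R \<nu> \<sigma>))\<bar>
          \<le> C * (r powr (s - 1) + r powr (s - 1 + \<alpha>))"
    proof (intro exI[of _ C] conjI Cpos allI ballI impI)
      fix k \<sigma> r assume \<sigma>: "\<sigma> \<in> frontier \<Omega>" and r: "0 < r \<and> r < real k * \<epsilon>"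
      then have that: "\<sigma> \<in> frontier \<Omega>" "0 < r" "r < real k * \<epsilon>" by auto
      have k: "real k > 0" using kpos that(2,3) .
      have "real k powr (s - 1) * \<bar>frechet_derivative (\<lambda>x. u x * (1 - \<rho> (real k * \<delta> x))) (at (P k \<sigma> r)) (X (P k \<sigma> r))\<bar>
          = \<bar>F k \<sigma> r\<bar>" using formula[OF that, symmetric] k by (simp add: abs_mult)
      also have "\<dots> \<le> \<bar>T1 k \<sigma> r\<bar> + \<bar>T2 k \<sigma> r\<bar> + \<bar>T3 k \<sigma> r\<bar>" unfolding F_def by linarith
      also have "\<dots> \<le> c * MX * r powr (s - 1 + \<alpha>) + Mp * s * r powr (s - 1) * (Mn * MX) * 1
          + Mp * (2 * r powr (s - 1)) * M1 * (Mn * MX)"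
        using T1b'[OF that] T2b[OF that] T3b[OF that] by linarith
      also have "\<dots> \<le> C * (r powr (s - 1) + r powr (s - 1 + \<alpha>))"
      proof -
        have a: "0 \<le> r powr (s - 1)" "0 \<le> r powr (s - 1 + \<alpha>)" by auto
        have "0 \<le> c * MX * r powr (s - 1)" using c MX a by auto
        moreover have "0 \<le> (Mp * s * Mn * MX + 2 * Mp * M1 * Mn * MX) * r powr (s - 1 + \<alpha>)"
          using Mp M1 Mn MX s a by auto
        ultimately show ?thesis unfolding C_def by (simp add: algebra_simps)
      qed
      finally show "real k powr (s - 1) * \<bar>frechet_derivative (\<lambda>x. u x * (1 - \<rho> (real k * \<delta> x))) (at (\<sigma> + (r / real k) *\<^sub>R \<nu> \<sigma>)) (X (\<sigma> + (r / real k) *\<^sub>R \<nu> \<sigma>))\<bar>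
          \<le> C * (r powr (s - 1) + r powr (s - 1 + \<alpha>))" unfolding P_def by simp
    qed
  next
    show "\<forall>\<sigma>\<in>frontier \<Omega>. \<forall>r>0. ((\<lambda>k. real k powr (s - 1) *
        frechet_derivative (\<lambda>x. u x * (1 - \<rho> (real k * \<delta> x))) (at (\<sigma> + (r / real k) *\<^sub>R \<nu> \<sigma>)) (X (\<sigma> + (r / real k) *\<^sub>R \<nu> \<sigma>)))
         \<longlongrightarrow> deriv (\<lambda>r. max r 0 powr s * (1 - \<rho> r)) r * \<psi> \<sigma> * (X \<sigma> \<bullet> \<nu> \<sigma>)) sequentially"
    proof (intro ballI allI impI)
      fix \<sigma> and r :: real assume \<sigma>: "\<sigma> \<in> frontier \<Omega>" and r: "0 < r"
      obtain N :: nat where N: "r / \<epsilon> < real N" using reals_Archimedean2 by blast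
      have ev: "eventually (\<lambda>k. \<sigma> \<in> frontier \<Omega> \<and> 0 < r \<and> r < real k * \<epsilon>) sequentially"
      proof (rule eventually_sequentiallyI[of N])
        fix k assume "N \<le> k"
        then have "real N * \<epsilon> \<le> real k * \<epsilon>" using eps by (intro mult_right_mono) auto
        moreover have "r < real N * \<epsilon>" using N eps by (simp add: divide_less_eq)
        ultimately show "\<sigma> \<in> frontier \<Omega> \<and> 0 < r \<and> r < real k * \<epsilon>" using \<sigma> r by auto
      qed
      have evO: "eventually (\<lambda>k. P k \<sigma> r \<in> closure \<Omega>) sequentially"
        using ev by eventually_elim (use PO closure_subset in blast)
      have \<sigma>c: "\<sigma> \<in> closure \<Omega>" using \<sigma> unfolding frontier_def by auto
      have Pt: "(\<lambda>k. P k \<sigma> r) \<longlonglongrightarrow> \<sigma>"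
      proof -
        have "(\<lambda>k. \<sigma> + (r / real k) *\<^sub>R \<nu> \<sigma>) \<longlonglongrightarrow> \<sigma> + 0 *\<^sub>R \<nu> \<sigma>"
          by (intro tendsto_intros)
        then show ?thesis unfolding P_def by simp
      qed
      have psit: "(\<lambda>k. \<psi> (P k \<sigma> r)) \<longlonglongrightarrow> \<psi> \<sigma>"
        by (rule continuous_on_tendsto_compose[OF psi_ext Pt \<sigma>c evO])
      have Xt: "(\<lambda>k. X (P k \<sigma> r)) \<longlonglongrightarrow> X \<sigma>"
        by (rule continuous_on_tendsto_compose[OF X_cont Pt \<sigma>c evO])
      have "\<bar>L\<bar>-lipschitz_on UNIV G" unfolding lipschitz_on_def
        using GL by (auto simp: dist_norm intro: order_trans[OF _ mult_right_mono[OF abs_ge_self]])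
      then have Gc: "continuous_on UNIV G" by (rule lipschitz_on_continuous_on)
      have Gt: "(\<lambda>k. G (P k \<sigma> r)) \<longlonglongrightarrow> G \<sigma>"
        by (rule continuous_on_tendsto_compose[OF Gc Pt]) auto
      have T1t: "(\<lambda>k. T1 k \<sigma> r) \<longlonglongrightarrow> 0"
      proof (rule Lim_null_comparison)
        show "eventually (\<lambda>k. norm (T1 k \<sigma> r) \<le> c * MX * (r powr (s - 1 + \<alpha>) * real k powr (- \<alpha>))) sequentially"
          using ev by eventually_elim (use T1b in auto)
        have "(\<lambda>k. real k powr (- \<alpha>)) \<longlonglongrightarrow> 0"
          using alpha by (intro tendsto_neg_powr filterlim_real_sequentially) auto
        then have "(\<lambda>k. c * MX * (r powr (s - 1 + \<alpha>) * real k powr (- \<alpha>))) \<longlonglongrightarrow> c * MX * (r powr (s - 1 + \<alpha>) * 0)"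
          by (intro tendsto_intros)
        then show "(\<lambda>k. c * MX * (r powr (s - 1 + \<alpha>) * real k powr (- \<alpha>))) \<longlonglongrightarrow> 0" by simp
      qed
      have T2t: "(\<lambda>k. T2 k \<sigma> r) \<longlonglongrightarrow> \<psi> \<sigma> * s * r powr (s-1) * (G \<sigma> \<bullet> X \<sigma>) * (1 - \<rho> r)"
        unfolding T2_def by (intro tendsto_intros psit Gt Xt)
      have T3t: "(\<lambda>k. T3 k \<sigma> r) \<longlonglongrightarrow> \<psi> \<sigma> * r powr s * D 1 r * (G \<sigma> \<bullet> X \<sigma>)"
        unfolding T3_def by (intro tendsto_intros psit Gt Xt)
      have Ft: "(\<lambda>k. F k \<sigma> r) \<longlonglongrightarrow> 0 + \<psi> \<sigma> * s * r powr (s-1) * (G \<sigma> \<bullet> X \<sigma>) * (1 - \<rho> r) - \<psi> \<sigma> * r powr s * D 1 r * (G \<sigma> \<bullet> X \<sigma>)"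
        unfolding F_def by (intro tendsto_intros T1t T2t T3t)
      have Gnu: "G \<sigma> \<bullet> X \<sigma> = X \<sigma> \<bullet> \<nu> \<sigma>"
      proof -
        have "(\<lambda>v. G \<sigma> \<bullet> v) = (\<lambda>v. \<nu> \<sigma> \<bullet> v)"
          using has_derivative_unique[OF GD[of \<sigma>]] nu \<sigma> by blast
        then have "G \<sigma> \<bullet> X \<sigma> = \<nu> \<sigma> \<bullet> X \<sigma>" by metis
        then show ?thesis by (simp add: inner_commute)
      qed
      have hd: "deriv (\<lambda>r. max r 0 powr s * (1 - \<rho> r)) r = s * r powr (s - 1) * (1 - \<rho> r) - r powr s * D 1 r"
      proof (rule DERIV_imp_deriv)
        have d1: "((\<lambda>t. 1 - \<rho> t) has_real_derivative 0 - D 1 r) (at r)"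
          using Dd[of 0 r] D0 by (intro DERIV_diff DERIV_const) auto
        have "((\<lambda>t. t powr s * (1 - \<rho> t)) has_real_derivative s * r powr (s - 1) * (1 - \<rho> r) + (0 - D 1 r) * r powr s) (at r)"
          using DERIV_mult[OF has_real_derivative_powr[OF r, of s] d1] .
        then have "((\<lambda>t. max t 0 powr s * (1 - \<rho> t)) has_real_derivative s * r powr (s - 1) * (1 - \<rho> r) + (0 - D 1 r) * r powr s) (at r)"
          by (rule has_field_derivative_transform_within_open[of _ _ _ "{0<..}"]) (use r in auto)
        then show "((\<lambda>r. max r 0 powr s * (1 - \<rho> r)) has_real_derivative s * r powr (s - 1) * (1 - \<rho> r) - r powr s * D 1 r) (at r)"
          by (simp add: algebra_simps)
      qed
      have Ft': "(\<lambda>k. F k \<sigma> r) \<longlonglongrightarrow> deriv (\<lambda>r. max r 0 powr s * (1 - \<rho> r)) r * \<psi> \<sigma> * (X \<sigma> \<bullet> \<nu> \<sigma>)"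
        using Ft unfolding hd Gnu by (simp add: algebra_simps)
      have evF: "eventually (\<lambda>k. F k \<sigma> r = real k powr (s - 1) *
        frechet_derivative (\<lambda>x. u x * (1 - \<rho> (real k * \<delta> x))) (at (\<sigma> + (r / real k) *\<^sub>R \<nu> \<sigma>)) (X (\<sigma> + (r / real k) *\<^sub>R \<nu> \<sigma>))) sequentially"
        using ev by eventually_elim (use formula in \<open>auto simp: P_def\<close>)
      show "((\<lambda>k. real k powr (s - 1) *
        frechet_derivative (\<lambda>x. u x * (1 - \<rho> (real k * \<delta> x))) (at (\<sigma> + (r / real k) *\<^sub>R \<nu> \<sigma>)) (X (\<sigma> + (r / real k) *\<^sub>R \<nu> \<sigma>)))
         \<longlongrightarrow> deriv (\<lambda>r. max r 0 powr s * (1 - \<rho> r)) r * \<psi> \<sigma> * (X \<sigma> \<bullet> \<nu> \<sigma>)) sequentially"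
        by (rule Lim_transform_eventually[OF Ft' evF])
    qed
  qed
qed

end
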